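(* Let $r\ge2$ and for $i=1,\ldots,r$ let $\mathcal{A}_i=t_i\,\mathbf a_i\otimes\mathbf b_i\otimes\mathbf c_i\in\mathbb{R}^{m_1\times m_2\times m_3}$ be rank-1 tensors with $t_i\in\mathbb{R}\setminus\{0\}$ and $\|\mathbf a_i\|=\|\mathbf b_i\|=\|\mathbf c_i\|=1$. Then \[\kappa(\mathcal{A}_1,\ldots,\mathcal{A}_r)\ge\max_{1\le i\ne j\le r}\frac{1}{\sqrt{1-|\langle\mathbf c_i,\mathbf c_j\rangle|}}\] (with the right-hand side interpreted as $\infty$ if some $|\langle\mathbf c_i,\mathbf c_j\rangle|=1$).
   Context: $\mathcal{S}$ denotes the manifold of rank-1 tensors in $\mathbb{R}^{m_1\times m_2\times m_3}$. The condition number is $\kappa(\mathcal{A}_1,\ldots,\mathcal{A}_r)=1/\varsigma_{\min}([U_1\ \cdots\ U_r])$, where $U_i$ is a matrix whose columns form an orthonormal basis of the tangent space $T_{\mathcal{A}_i}\mathcal{S}\subset\mathbb{R}^{m_1m_2m_3}$ and $\varsigma_{\min}$ denotes the smallest singular value ($\kappa=\infty$ if it is zero). $\langle\cdot,\cdot\rangle$ is the Euclidean inner product. *)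

theory Defs
  imports "HOL-Analysis.Analysis" "HOL-Library.Extended_Real"
begin

type_synonym ('a,'b,'c) tensor3 = "real ^ ('a \<times> 'b \<times> 'c)"

text \<open>The outer product a (x) b (x) c in R^{m1 x m2 x m3}; the dimensions are the
  cardinalities of the finite index types.\<close>
definition outer3 :: "real^'a \<Rightarrow> real^'b \<Rightarrow> real^'c \<Rightarrow> ('a::finite,'b::finite,'c::finite) tensor3" where
  "outer3 a b c = (\<chi> p. a $ fst p * b $ fst (snd p) * c $ snd (snd p))"

definition rank1_tensors :: "('a::finite,'b::finite,'c::finite) tensor3 set" where
  "rank1_tensors = {outer3 a b c | a b c. outer3 a b c \<noteq> 0}"

definition tangent_space :: "('a::finite,'b::finite,'c::finite) tensor3 \<Rightarrow> ('a,'b,'c) tensor3 set" where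
  "tangent_space A = {v. \<exists>\<gamma>. \<gamma> 0 = A \<and> (\<forall>\<^sub>F s in nhds 0. \<gamma> s \<in> rank1_tensors)
                            \<and> (\<gamma> has_vector_derivative v) (at 0)}"

definition orthonormal_basis_of :: "'v::real_inner set \<Rightarrow> 'v set \<Rightarrow> bool" where
  "orthonormal_basis_of U T \<longleftrightarrow> finite U \<and> (\<forall>u\<in>U. norm u = 1) \<and> pairwise orthogonal U
      \<and> span U = T"

text \<open>Smallest singular value of the matrix [U_1 ... U_r] whose columns are indexed by
  pairs (i,u) with 1 \<le> i \<le> r and u \<in> U i: min of ||Mx|| over unit vectors x.\<close>
definition sigma_min_blocks :: "nat \<Rightarrow> (nat \<Rightarrow> 'v::real_inner set) \<Rightarrow> real" where
  "sigma_min_blocks r U = Inf {norm (\<Sum>p\<in>Sigma {1..r} U. x p *\<^sub>R snd p) | x.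
        (\<Sum>p\<in>Sigma {1..r} U. (x p)\<^sup>2) = 1}"

definition cond_number :: "nat \<Rightarrow> (nat \<Rightarrow> 'v::real_inner set) \<Rightarrow> ereal" where
  "cond_number r U = (if sigma_min_blocks r U = 0 then \<infinity> else ereal (1 / sigma_min_blocks r U))"

end

theory Submission
  imports Defs
begin
lemma sum_triple: "(\<Sum>p\<in>(UNIV::('a::finite\<times>'b::finite\<times>'c::finite) set). f p) = (\<Sum>i\<in>UNIV. \<Sum>j\<in>UNIV. \<Sum>k\<in>UNIV. f (i,j,k))"
proof -
  have "(\<Sum>p\<in>(UNIV::('a\<times>'b\<times>'c) set). f p) = (\<Sum>p\<in>UNIV \<times> UNIV. f p)" by simp
  also have "\<dots> = (\<Sum>i\<in>UNIV. \<Sum>q\<in>UNIV. f (i,q))" by (rule sum.cartesian_product')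
  also have "\<dots> = (\<Sum>i\<in>UNIV. \<Sum>j\<in>UNIV. \<Sum>k\<in>UNIV. f (i,j,k))"
  proof (rule sum.cong[OF refl])
    fix i
    have "(\<Sum>q\<in>(UNIV::('b\<times>'c) set). f (i,q)) = (\<Sum>q\<in>UNIV \<times> UNIV. f (i,q))" by simp
    also have "\<dots> = (\<Sum>j\<in>UNIV. \<Sum>k\<in>UNIV. f (i,j,k))" by (rule sum.cartesian_product')
    finally show "(\<Sum>q\<in>UNIV. f (i,q)) = (\<Sum>j\<in>UNIV. \<Sum>k\<in>UNIV. f (i,j,k))" .
  qed
  finally show ?thesis .
qed
lemma triple_prod: "(\<Sum>i\<in>A. f i) * ((\<Sum>j\<in>B. g j) * (\<Sum>k\<in>C. h k)) = (\<Sum>i\<in>A. \<Sum>j\<in>B. \<Sum>k\<in>C. f i * (g j * (h k::real)))"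
proof -
  have 1: "(\<Sum>j\<in>B. g j) * (\<Sum>k\<in>C. h k) = (\<Sum>j\<in>B. \<Sum>k\<in>C. g j * h k)"
    by (rule sum_product)
  have "(\<Sum>i\<in>A. f i) * (\<Sum>j\<in>B. \<Sum>k\<in>C. g j * h k) = (\<Sum>i\<in>A. \<Sum>j\<in>B. f i * (\<Sum>k\<in>C. g j * h k))"
    by (rule sum_product)
  also have "\<dots> = (\<Sum>i\<in>A. \<Sum>j\<in>B. \<Sum>k\<in>C. f i * (g j * (h k::real)))"
    by (simp add: sum_distrib_left)
  finally show ?thesis using 1 by simp
qed
lemma inner_outer3: "outer3 a b c \<bullet> outer3 x y z = (a\<bullet>x)*(b\<bullet>y)*(c\<bullet>z)"
  unfolding outer3_def inner_vec_def
  by (simp add: sum_triple triple_prod mult.assoc mult.left_commute)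
lemma outer3_add1: "outer3 (a + s *\<^sub>R x) b c = outer3 a b c + s *\<^sub>R outer3 x b c"
  by (simp add: outer3_def vec_eq_iff algebra_simps)
lemma outer3_add2: "outer3 a (b + s *\<^sub>R y) c = outer3 a b c + s *\<^sub>R outer3 a y c"
  by (simp add: outer3_def vec_eq_iff algebra_simps)
lemma outer3_scale1: "outer3 (s *\<^sub>R a) b c = s *\<^sub>R outer3 a b c"
  by (simp add: outer3_def vec_eq_iff algebra_simps)

lemma tangent_curve:
  assumes "A \<noteq> 0" and "\<And>s. \<gamma> s = A + s *\<^sub>R V" and "\<And>s. \<gamma> s \<noteq> 0 \<Longrightarrow> \<gamma> s \<in> rank1_tensors"
  shows "V \<in> tangent_space A"
  unfolding tangent_space_def
proof (intro CollectI exI conjI)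
  show "\<gamma> 0 = A" using assms(2) by simp
  have "((\<lambda>s. A + s *\<^sub>R V) \<longlongrightarrow> A + 0 *\<^sub>R V) (at 0)"
    by (intro tendsto_intros)
  hence "((\<lambda>s. A + s *\<^sub>R V) \<longlongrightarrow> A) (at 0)" by simp
  hence "\<forall>\<^sub>F s in at 0. A + s *\<^sub>R V \<noteq> 0" using assms(1) by (rule tendsto_imp_eventually_ne)
  moreover have "A + 0 *\<^sub>R V \<noteq> 0" using assms(1) by simp
  ultimately have "\<forall>\<^sub>F s in nhds 0. A + s *\<^sub>R V \<noteq> 0" by (simp add: eventually_nhds_conv_at)
  thus "\<forall>\<^sub>F s in nhds 0. \<gamma> s \<in> rank1_tensors"
    by (rule eventually_mono) (use assms in auto)
  have "\<gamma> = (\<lambda>s. A + s *\<^sub>R V)" using assms(2) by auto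
  moreover have "((\<lambda>s. A + s *\<^sub>R V) has_vector_derivative V) (at 0)"
    by (auto intro!: derivative_eq_intros)
  ultimately show "(\<gamma> has_vector_derivative V) (at 0)" by simp
qed

lemma tan1: assumes "outer3 a b c \<noteq> 0" shows "outer3 x b c \<in> tangent_space (outer3 a b c)"
  by (rule tangent_curve[where \<gamma>="\<lambda>s. outer3 (a + s *\<^sub>R x) b c"])
     (use assms in \<open>auto simp: outer3_add1[symmetric] rank1_tensors_def\<close>)
lemma tan2: assumes "outer3 a b c \<noteq> 0" shows "outer3 a y c \<in> tangent_space (outer3 a b c)"
  by (rule tangent_curve[where \<gamma>="\<lambda>s. outer3 a (b + s *\<^sub>R y) c"])
     (use assms in \<open>auto simp: outer3_add2[symmetric] rank1_tensors_def\<close>)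
lemma onb_coords:
  assumes "orthonormal_basis_of U T" "u \<in> T"
  shows "\<exists>\<alpha>. u = (\<Sum>e\<in>U. \<alpha> e *\<^sub>R e) \<and> (\<Sum>e\<in>U. (\<alpha> e)\<^sup>2) = (norm u)\<^sup>2"
proof -
  have fin: "finite U" and un: "\<forall>e\<in>U. norm e = 1" and po: "pairwise orthogonal U" and sp: "span U = T"
    using assms(1) unfolding orthonormal_basis_of_def by auto
  obtain \<alpha> where u: "u = (\<Sum>e\<in>U. \<alpha> e *\<^sub>R e)" using assms(2) sp span_finite[OF fin] by auto
  have inner1: "(\<Sum>f\<in>U. \<alpha> f * (e \<bullet> f)) = \<alpha> e" if "e \<in> U" for e
  proof -
    have "(\<Sum>f\<in>U. \<alpha> f * (e \<bullet> f)) = \<alpha> e * (e \<bullet> e) + (\<Sum>f\<in>U - {e}. \<alpha> f * (e \<bullet> f))"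
      using fin that by (simp add: sum.remove)
    also have "(\<Sum>f\<in>U - {e}. \<alpha> f * (e \<bullet> f)) = 0"
      using po that by (intro sum.neutral) (auto simp: pairwise_def orthogonal_def)
    also have "e \<bullet> e = 1" using un that by (simp add: dot_square_norm)
    finally show ?thesis by simp
  qed
  have "(norm u)\<^sup>2 = u \<bullet> u" by (simp add: dot_square_norm)
  also have "\<dots> = (\<Sum>e\<in>U. \<alpha> e * (\<Sum>f\<in>U. \<alpha> f * (e \<bullet> f)))"
    unfolding u by (simp add: inner_sum_left inner_sum_right sum_distrib_left algebra_simps inner_commute)
  also have "\<dots> = (\<Sum>e\<in>U. (\<alpha> e)\<^sup>2)"
    by (rule sum.cong) (auto simp: inner1 power2_eq_square)
  finally show ?thesis using u by auto
qed

lemma sum_Sigma_delta: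
  assumes "finite A" "\<forall>k\<in>A. finite (B k)" "i \<in> A"
  shows "(\<Sum>p\<in>Sigma A B. if fst p = i then F (snd p) else (0::'z::comm_monoid_add)) = (\<Sum>e\<in>B i. F e)"
proof -
  have "(\<Sum>p\<in>Sigma A B. if fst p = i then F (snd p) else 0) = (\<Sum>k\<in>A. \<Sum>e\<in>B k. if k = i then F e else 0)"
    using sum.Sigma[OF assms(1,2), of "\<lambda>k e. if k = i then F e else 0"] by (simp add: split_def)
  also have "\<dots> = (\<Sum>k\<in>A. if k = i then (\<Sum>e\<in>B i. F e) else 0)"
    by (rule sum.cong) auto
  also have "\<dots> = (\<Sum>e\<in>B i. F e)" using assms by simp
  finally show ?thesis .
qed
theorem lemma3p1:
  fixes r :: nat
    and t :: "nat \<Rightarrow> real"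
    and a :: "nat \<Rightarrow> real^'a::finite" and b :: "nat \<Rightarrow> real^'b::finite" and c :: "nat \<Rightarrow> real^'c::finite"
    and U :: "nat \<Rightarrow> ('a,'b,'c) tensor3 set"
  assumes "r \<ge> 2"
    and "\<And>i. i \<in> {1..r} \<Longrightarrow> t i \<noteq> 0"
    and "\<And>i. i \<in> {1..r} \<Longrightarrow> norm (a i) = 1 \<and> norm (b i) = 1 \<and> norm (c i) = 1"
    and "\<And>i. i \<in> {1..r} \<Longrightarrow>
           orthonormal_basis_of (U i) (tangent_space (t i *\<^sub>R outer3 (a i) (b i) (c i)))"
  shows "\<forall>i\<in>{1..r}. \<forall>j\<in>{1..r}. i \<noteq> j \<longrightarrow>
           cond_number r U \<ge>
             (if \<bar>c i \<bullet> c j\<bar> = 1 then \<infinity>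
              else ereal (1 / sqrt (1 - \<bar>c i \<bullet> c j\<bar>)))"
proof (intro ballI impI)
  fix i j assume i: "i \<in> {1..r}" and j: "j \<in> {1..r}" and ij: "i \<noteq> j"
  define T where "T k = tangent_space (t k *\<^sub>R outer3 (a k) (b k) (c k))" for k
  have sq1: "x \<bullet> x = 1" if "norm x = 1" for x :: "real^'z::finite"
    using that by (simp add: dot_square_norm)
  have nrm: "a k \<bullet> a k = 1" "b k \<bullet> b k = 1" "c k \<bullet> c k = 1" if "k \<in> {1..r}" for k
    using assms(3)[OF that] sq1 by auto
  have Aeq: "t k *\<^sub>R outer3 (a k) (b k) (c k) = outer3 (t k *\<^sub>R a k) (b k) (c k)" for k
    by (simp add: outer3_scale1)
  have Anz: "outer3 (t k *\<^sub>R a k) (b k) (c k) \<noteq> 0" if "k \<in> {1..r}" for k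
  proof
    assume "outer3 (t k *\<^sub>R a k) (b k) (c k) = 0"
    hence "outer3 (t k *\<^sub>R a k) (b k) (c k) \<bullet> outer3 (t k *\<^sub>R a k) (b k) (c k) = 0" by simp
    thus False using nrm[OF that] assms(2)[OF that] by (simp add: inner_outer3)
  qed
  have spT: "span (U k) = T k" "finite (U k)" if "k \<in> {1..r}" for k
    using assms(4)[OF that] unfolding orthonormal_basis_of_def T_def by auto
  define \<sigma> :: real where "\<sigma> = (if c i \<bullet> c j \<ge> 0 then 1 else -1)"
  define u where "u = outer3 (a j) (b i) (c i)"
  define v where "v = \<sigma> *\<^sub>R outer3 (a j) (b i) (c j)"
  have uT: "u \<in> T i" unfolding u_def T_def Aeq by (rule tan1[OF Anz[OF i]])
  have "outer3 (t j *\<^sub>R a j) (b i) (c j) \<in> T j" unfolding T_def Aeq by (rule tan2[OF Anz[OF j]])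
  hence "outer3 (t j *\<^sub>R a j) (b i) (c j) \<in> span (U j)" using spT[OF j] by simp
  hence "(\<sigma> / t j) *\<^sub>R outer3 (t j *\<^sub>R a j) (b i) (c j) \<in> span (U j)" by (rule span_mul)
  hence vT: "v \<in> T j" using spT[OF j] assms(2)[OF j] by (simp add: v_def outer3_scale1)
  have uu: "u \<bullet> u = 1" using nrm[OF i] nrm[OF j] by (simp add: u_def inner_outer3)
  have vv: "v \<bullet> v = 1" using nrm[OF i] nrm[OF j] by (simp add: v_def inner_outer3 \<sigma>_def)
  have uv: "u \<bullet> v = \<bar>c i \<bullet> c j\<bar>" using nrm[OF i] nrm[OF j] by (simp add: u_def v_def inner_outer3 \<sigma>_def)
  have nu: "norm u = 1" using uu by (simp add: norm_eq_sqrt_inner)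
  have nv: "norm v = 1" using vv by (simp add: norm_eq_sqrt_inner)
  obtain \<alpha> where \<alpha>: "u = (\<Sum>e\<in>U i. \<alpha> e *\<^sub>R e)" "(\<Sum>e\<in>U i. (\<alpha> e)\<^sup>2) = 1"
    using onb_coords[OF assms(4)[OF i], folded T_def, OF uT] nu by auto
  obtain \<beta> where \<beta>: "v = (\<Sum>e\<in>U j. \<beta> e *\<^sub>R e)" "(\<Sum>e\<in>U j. (\<beta> e)\<^sup>2) = 1"
    using onb_coords[OF assms(4)[OF j], folded T_def, OF vT] nv by auto
  define x where "x p = (if fst p = i then \<alpha> (snd p) / sqrt 2 else 0) + (if fst p = j then - \<beta> (snd p) / sqrt 2 else 0)" for p :: "nat \<times> ('a,'b,'c) tensor3"
  have finS: "finite {1..r}" "\<forall>k\<in>{1..r}. finite (U k)" using spT by auto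
  have "(\<Sum>p\<in>Sigma {1..r} U. x p *\<^sub>R snd p) =
      (\<Sum>p\<in>Sigma {1..r} U. if fst p = i then (\<alpha> (snd p) / sqrt 2) *\<^sub>R snd p else 0)
    + (\<Sum>p\<in>Sigma {1..r} U. if fst p = j then (- \<beta> (snd p) / sqrt 2) *\<^sub>R snd p else 0)"
    unfolding sum.distrib[symmetric] by (rule sum.cong) (auto simp: x_def scaleR_add_left)
  also have "\<dots> = (1 / sqrt 2) *\<^sub>R (u - v)"
  proof -
    have "(1 / sqrt 2) *\<^sub>R (u - v) = (\<Sum>e\<in>U i. (\<alpha> e / sqrt 2) *\<^sub>R e) + (\<Sum>e\<in>U j. (- \<beta> e / sqrt 2) *\<^sub>R e)"
      unfolding \<alpha>(1) \<beta>(1) by (simp add: scaleR_diff_right scaleR_sum_right sum_negf)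
    thus ?thesis
      using sum_Sigma_delta[OF finS i, of "\<lambda>e. (\<alpha> e / sqrt 2) *\<^sub>R e"]
        sum_Sigma_delta[OF finS j, of "\<lambda>e. (- \<beta> e / sqrt 2) *\<^sub>R e"] by simp
  qed
  finally have Sx: "(\<Sum>p\<in>Sigma {1..r} U. x p *\<^sub>R snd p) = (1 / sqrt 2) *\<^sub>R (u - v)" .
  have "(\<Sum>p\<in>Sigma {1..r} U. (x p)\<^sup>2) =
      (\<Sum>p\<in>Sigma {1..r} U. if fst p = i then (\<alpha> (snd p))\<^sup>2 / 2 else 0)
    + (\<Sum>p\<in>Sigma {1..r} U. if fst p = j then (\<beta> (snd p))\<^sup>2 / 2 else 0)"
    unfolding sum.distrib[symmetric] by (rule sum.cong) (use ij in \<open>auto simp: x_def power_divide\<close>)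
  also have "\<dots> = 1"
    using sum_Sigma_delta[OF finS i, of "\<lambda>e. (\<alpha> e)\<^sup>2 / 2"] sum_Sigma_delta[OF finS j, of "\<lambda>e. (\<beta> e)\<^sup>2 / 2"] \<alpha>(2) \<beta>(2)
    by (simp add: sum_divide_distrib[symmetric])
  finally have Sx2: "(\<Sum>p\<in>Sigma {1..r} U. (x p)\<^sup>2) = 1" .
  have "(norm ((1 / sqrt 2) *\<^sub>R (u - v)))\<^sup>2 = (1/2) * ((u - v) \<bullet> (u - v))"
    by (simp add: power_mult_distrib dot_square_norm power_divide)
  also have "\<dots> = 1 - \<bar>c i \<bullet> c j\<bar>" using uu vv uv
    by (simp add: inner_diff_left inner_diff_right inner_commute[of v u])
  finally have nn: "norm ((1 / sqrt 2) *\<^sub>R (u - v)) = sqrt (1 - \<bar>c i \<bullet> c j\<bar>)"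
    by (metis norm_ge_zero real_sqrt_abs abs_of_nonneg real_sqrt_power)
  define S where "S = {norm (\<Sum>p\<in>Sigma {1..r} U. x p *\<^sub>R snd p) | x.
        (\<Sum>p\<in>Sigma {1..r} U. (x p)\<^sup>2) = 1}"
  have "sqrt (1 - \<bar>c i \<bullet> c j\<bar>) = norm (\<Sum>p\<in>Sigma {1..r} U. x p *\<^sub>R snd p)"
    using Sx nn by simp
  hence inS: "sqrt (1 - \<bar>c i \<bullet> c j\<bar>) \<in> S" unfolding S_def using Sx2 by blast
  have bdd: "bdd_below S" unfolding S_def by (rule bdd_belowI[of _ 0]) auto
  have sm: "sigma_min_blocks r U = Inf S" unfolding sigma_min_blocks_def S_def by simp
  have le: "sigma_min_blocks r U \<le> sqrt (1 - \<bar>c i \<bullet> c j\<bar>)"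
    unfolding sm by (rule cInf_lower[OF inS bdd])
  have ge: "sigma_min_blocks r U \<ge> 0"
    unfolding sm by (rule cInf_greatest) (use inS in \<open>auto simp: S_def\<close>)
  have cs: "\<bar>c i \<bullet> c j\<bar> \<le> 1" using Cauchy_Schwarz_ineq2[of "c i" "c j"] assms(3)[OF i] assms(3)[OF j] by simp
  show "cond_number r U \<ge> (if \<bar>c i \<bullet> c j\<bar> = 1 then \<infinity> else ereal (1 / sqrt (1 - \<bar>c i \<bullet> c j\<bar>)))"
  proof (cases "\<bar>c i \<bullet> c j\<bar> = 1")
    case True
    then have "sigma_min_blocks r U = 0" using le ge by simp
    then show ?thesis by (simp add: cond_number_def)
  next
    case False
    then have pos: "0 < 1 - \<bar>c i \<bullet> c j\<bar>" using cs by simp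
    show ?thesis
    proof (cases "sigma_min_blocks r U = 0")
      case True then show ?thesis by (simp add: cond_number_def)
    next
      case F2: False
      then have "0 < sigma_min_blocks r U" using ge by simp
      have "1 / sqrt (1 - \<bar>c i \<bullet> c j\<bar>) \<le> 1 / sigma_min_blocks r U"
      proof (rule divide_left_mono)
        show "0 < sqrt (1 - \<bar>c i \<bullet> c j\<bar>) * sigma_min_blocks r U"
          using pos \<open>0 < sigma_min_blocks r U\<close> by simp
      qed (use le in auto)
      then show ?thesis using False F2 by (simp add: cond_number_def)
    qed
  qed
qed
end
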